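(* Let $\mathcal{G}=(V,E)$ be an $m$-uniform connected hypergraph with $m>2$ on $n$ vertices, with maximum degree $d_{\max}$ and minimum degree $d_{\min}$. Then $$\lambda_n(L_{\mathcal{G}})\le\frac{2d_{\max}(m-1)-1+\sqrt{4(m-1)^2d_{\max}^2|E|^2-2d_{\min}(m-1)+1}}{2(m-1)}.$$
   Context: A hypergraph $\mathcal{G}=(V,E)$ has a finite vertex set $V$ and a set $E$ of subsets of $V$ (edges); it is $m$-uniform if every edge has exactly $m$ vertices. The degree $d_i$ is the number of edges containing $i$, and for distinct $i,j$ the codegree $d_{ij}$ is the number of edges containing both. The Laplacian $L_{\mathcal{G}}$ has $(L_{\mathcal{G}})_{ii}=d_i$ and $(L_{\mathcal{G}})_{ij}=-d_{ij}/(m-1)$ for $i\ne j$; $\lambda_n(L_{\mathcal{G}})$ is its largest eigenvalue. *)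

theory Defs
  imports "HOL-Analysis.Analysis"
begin

text \<open>Hypergraphs on the vertex set UNIV of a finite type 'v; edges E :: 'v set set.\<close>

definition uniform_hg :: "nat \<Rightarrow> 'v set set \<Rightarrow> bool" where
  "uniform_hg m E \<longleftrightarrow> (\<forall>e\<in>E. card e = m)"

definition hg_adj :: "'v set set \<Rightarrow> ('v \<times> 'v) set" where
  "hg_adj E = {(i, j). \<exists>e\<in>E. i \<in> e \<and> j \<in> e}"

definition hg_connected :: "'v set set \<Rightarrow> bool" where
  "hg_connected E \<longleftrightarrow> (\<forall>i j. (i, j) \<in> (hg_adj E)\<^sup>*)"

definition hg_degree :: "'v set set \<Rightarrow> 'v \<Rightarrow> nat" where
  "hg_degree E i = card {e \<in> E. i \<in> e}"

definition hg_codegree :: "'v set set \<Rightarrow> 'v \<Rightarrow> 'v \<Rightarrow> nat" where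
  "hg_codegree E i j = card {e \<in> E. i \<in> e \<and> j \<in> e}"

definition max_degree :: "('v::finite) set set \<Rightarrow> nat" where
  "max_degree E = Max (range (hg_degree E))"

definition min_degree :: "('v::finite) set set \<Rightarrow> nat" where
  "min_degree E = Min (range (hg_degree E))"

definition hg_laplacian :: "nat \<Rightarrow> ('v::finite) set set \<Rightarrow> real^'v^'v" where
  "hg_laplacian m E = (\<chi> i j. if i = j then real (hg_degree E i)
      else - real (hg_codegree E i j) / (real m - 1))"

definition is_eigenvalue :: "real^'n^'n \<Rightarrow> real \<Rightarrow> bool" where
  "is_eigenvalue A c \<longleftrightarrow> (\<exists>v. v \<noteq> 0 \<and> A *v v = c *\<^sub>R v)"

text \<open>Largest eigenvalue (the Laplacian is real symmetric, so all eigenvalues are real).\<close>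
definition largest_eigenvalue :: "real^'n^'n \<Rightarrow> real" where
  "largest_eigenvalue A = Max {c. is_eigenvalue A c}"

end

theory Submission
  imports Defs
begin


lemma sym_eig_finite:
  fixes A :: "real^'n^'n"
  assumes sym: "transpose A = A"
  shows "finite {c. is_eigenvalue A c}"
proof -
  define f where "f c = (SOME v. v \<noteq> 0 \<and> A *v v = c *\<^sub>R v)" for c
  have fv: "f c \<noteq> 0 \<and> A *v f c = c *\<^sub>R f c" if "is_eigenvalue A c" for c
    using that unfolding f_def is_eigenvalue_def by (rule someI_ex)
  have orth: "f a \<bullet> f b = 0" if "is_eigenvalue A a" "is_eigenvalue A b" "a \<noteq> b" for a b
  proof -
    have "inner (f a v* A) (f b) = inner (f a) (A *v f b)" by (rule dot_lmul_matrix)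
    moreover have "f a v* A = A *v f a"
      by (metis sym transpose_matrix_vector)
    ultimately have "a * (f a \<bullet> f b) = b * (f a \<bullet> f b)"
      using fv[OF that(1)] fv[OF that(2)] by simp
    then show ?thesis using that(3) by simp
  qed
  have inj: "inj_on f {c. is_eigenvalue A c}"
  proof (rule inj_onI)
    fix a b assume "a \<in> {c. is_eigenvalue A c}" "b \<in> {c. is_eigenvalue A c}" "f a = f b"
    then show "a = b" using orth fv by (metis inner_eq_zero_iff mem_Collect_eq)
  qed
  have "pairwise orthogonal (f ` {c. is_eigenvalue A c})"
    unfolding pairwise_def orthogonal_def using orth by auto
  then have "finite (f ` {c. is_eigenvalue A c})" by (rule pairwise_orthogonal_imp_finite)
  then show ?thesis using inj finite_imageD by blast
qed

lemma dcount:
  fixes S :: "'v set set" and J :: "'v set"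
  assumes "finite S" "finite J"
  shows "(\<Sum>j\<in>J. card {e\<in>S. j\<in>e}) = (\<Sum>e\<in>S. card (e \<inter> J))"
proof -
  have "(\<Sum>j\<in>J. card {e\<in>S. j\<in>e}) = (\<Sum>j\<in>J. \<Sum>e\<in>S. if j\<in>e then 1 else 0)"
    using assms by (simp add: sum.If_cases Int_def)
  also have "\<dots> = (\<Sum>e\<in>S. \<Sum>j\<in>J. if j\<in>e then 1 else 0)" by (rule sum.swap)
  also have "\<dots> = (\<Sum>e\<in>S. card (e \<inter> J))"
    using assms by (simp add: sum.If_cases Int_def conj_commute)
  finally show ?thesis .
qed

lemma row_codeg:
  fixes E :: "('v::finite) set set"
  assumes "uniform_hg m E"
  shows "(\<Sum>j\<in>UNIV-{i}. hg_codegree E i j) = hg_degree E i * (m - 1)"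
proof -
  have "(\<Sum>j\<in>UNIV-{i}. hg_codegree E i j) = (\<Sum>j\<in>UNIV-{i}. card {e\<in>{e\<in>E. i\<in>e}. j\<in>e})"
    unfolding hg_codegree_def by (intro sum.cong refl arg_cong[where f=card]) auto
  also have "\<dots> = (\<Sum>e\<in>{e\<in>E. i\<in>e}. card (e \<inter> (UNIV-{i})))"
    by (rule dcount) auto
  also have "\<dots> = (\<Sum>e\<in>{e\<in>E. i\<in>e}. m - 1)"
  proof (rule sum.cong)
    fix e assume "e \<in> {e\<in>E. i\<in>e}"
    then show "card (e \<inter> (UNIV-{i})) = m - 1" using assms unfolding uniform_hg_def
    proof -
      have "e \<inter> (UNIV-{i}) = e - {i}" by auto
      then show ?thesis using \<open>e \<in> {e\<in>E. i\<in>e}\<close> assms unfolding uniform_hg_def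
        by (simp add: card_Diff_singleton)
    qed
  qed simp
  finally show ?thesis by (simp add: hg_degree_def)
qed

lemma row_abs:
  fixes E :: "('v::finite) set set"
  assumes "uniform_hg m E" "m \<ge> 2"
  shows "(\<Sum>j\<in>UNIV. \<bar>hg_laplacian m E $ i $ j\<bar>) = 2 * real (hg_degree E i)"
proof -
  have k: "real m - 1 > 0" using assms by simp
  have "(\<Sum>j\<in>UNIV. \<bar>hg_laplacian m E $ i $ j\<bar>) =
     \<bar>hg_laplacian m E $ i $ i\<bar> + (\<Sum>j\<in>UNIV-{i}. \<bar>hg_laplacian m E $ i $ j\<bar>)"
    by (rule sum.remove) auto
  also have "(\<Sum>j\<in>UNIV-{i}. \<bar>hg_laplacian m E $ i $ j\<bar>) = (\<Sum>j\<in>UNIV-{i}. real (hg_codegree E i j) / (real m - 1))"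
    by (rule sum.cong) (use k in \<open>auto simp: hg_laplacian_def\<close>)
  also have "\<dots> = real (\<Sum>j\<in>UNIV-{i}. hg_codegree E i j) / (real m - 1)"
    by (simp add: sum_divide_distrib)
  also have "\<dots> = real (hg_degree E i)"
    using row_codeg[OF assms(1), of i] k assms(2) by (simp add: of_nat_diff)
  finally show ?thesis by (simp add: hg_laplacian_def)
qed

lemma row_sum:
  fixes E :: "('v::finite) set set"
  assumes "uniform_hg m E" "m \<ge> 2"
  shows "(\<Sum>j\<in>UNIV. hg_laplacian m E $ i $ j) = 0"
proof -
  have k: "real m - 1 > 0" using assms by simp
  have "(\<Sum>j\<in>UNIV. hg_laplacian m E $ i $ j) =
     hg_laplacian m E $ i $ i + (\<Sum>j\<in>UNIV-{i}. hg_laplacian m E $ i $ j)"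
    by (rule sum.remove) auto
  also have "(\<Sum>j\<in>UNIV-{i}. hg_laplacian m E $ i $ j) = (\<Sum>j\<in>UNIV-{i}. - (real (hg_codegree E i j) / (real m - 1)))"
    by (rule sum.cong) (use k in \<open>auto simp: hg_laplacian_def\<close>)
  also have "\<dots> = - (real (\<Sum>j\<in>UNIV-{i}. hg_codegree E i j) / (real m - 1))"
    by (simp add: sum_divide_distrib sum_negf)
  also have "\<dots> = - real (hg_degree E i)"
    using row_codeg[OF assms(1), of i] k assms(2) by (simp add: of_nat_diff)
  finally show ?thesis by (simp add: hg_laplacian_def)
qed

lemma gersh:
  fixes E :: "('v::finite) set set"
  assumes "uniform_hg m E" "m \<ge> 2" "is_eigenvalue (hg_laplacian m E) c"
  shows "c \<le> 2 * real (max_degree E)"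
proof -
  let ?L = "hg_laplacian m E"
  obtain v where v: "v \<noteq> 0" "?L *v v = c *\<^sub>R v" using assms(3) unfolding is_eigenvalue_def by blast
  define M where "M = Max (range (\<lambda>j. \<bar>v$j\<bar>))"
  have "M \<in> range (\<lambda>j. \<bar>v$j\<bar>)" unfolding M_def by (rule Max_in) auto
  then obtain i where i: "M = \<bar>v$i\<bar>" by auto
  have imax: "\<bar>v$j\<bar> \<le> \<bar>v$i\<bar>" for j unfolding i[symmetric] M_def by (rule Max_ge) auto
  have ipos: "\<bar>v$i\<bar> > 0"
  proof (rule ccontr)
    assume "\<not> \<bar>v$i\<bar> > 0"
    then have "v$j = 0" for j using imax[of j] by auto
    then show False using v(1) by (simp add: vec_eq_iff)
  qed
  have "c * v$i = (\<Sum>j\<in>UNIV. ?L$i$j * v$j)"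
    using arg_cong[OF v(2), of "\<lambda>x. x$i"] by (simp add: matrix_vector_mult_def)
  then have "\<bar>c\<bar> * \<bar>v$i\<bar> \<le> (\<Sum>j\<in>UNIV. \<bar>?L$i$j\<bar> * \<bar>v$j\<bar>)"
    by (metis (no_types, lifting) abs_mult sum.cong sum_abs)
  also have "\<dots> \<le> (\<Sum>j\<in>UNIV. \<bar>?L$i$j\<bar> * \<bar>v$i\<bar>)"
    by (intro sum_mono mult_left_mono imax) auto
  also have "\<dots> = 2 * real (hg_degree E i) * \<bar>v$i\<bar>"
    using row_abs[OF assms(1,2), of i] by (metis sum_distrib_right)
  finally have "\<bar>c\<bar> \<le> 2 * real (hg_degree E i)" using ipos by simp
  moreover have "hg_degree E i \<le> max_degree E" unfolding max_degree_def by (rule Max_ge) auto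
  ultimately show ?thesis by linarith
qed

lemma zero_eig:
  fixes E :: "('v::finite) set set"
  assumes "uniform_hg m E" "m \<ge> 2"
  shows "is_eigenvalue (hg_laplacian m E) 0"
  unfolding is_eigenvalue_def
proof (intro exI conjI)
  show "(1::real^'v) \<noteq> 0" by (simp add: vec_eq_iff)
  show "hg_laplacian m E *v 1 = 0 *\<^sub>R (1::real^'v)"
    using row_sum[OF assms] by (simp add: vec_eq_iff matrix_vector_mult_def)
qed

lemma lap_sym:
  fixes E :: "('v::finite) set set"
  shows "transpose (hg_laplacian m E) = hg_laplacian m E"
  unfolding hg_laplacian_def transpose_def hg_codegree_def
  by (simp add: vec_eq_iff conj_commute)



lemma num2:
  fixes k D N dm :: real
  assumes "k \<ge> 2" "D \<ge> 1" "N \<ge> 2" "0 \<le> dm" "dm \<le> D"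
  shows "2 * D \<le> (2 * D * k - 1 + sqrt (4 * k^2 * D^2 * N^2 - 2 * dm * k + 1)) / (2 * k)"
proof -
  have "2^2 \<le> N^2" by (rule power_mono) (use assms in auto)
  then have N2: "N^2 \<ge> 4" by simp
  have a: "4 * k^2 * D^2 * N^2 \<ge> 4 * k^2 * D^2 * 4"
    using N2 by (intro mult_left_mono) auto
  have kD: "k * D \<ge> k * 1" using assms by (intro mult_left_mono) auto
  have "(6 * D * k) * (2 * (k * D)) \<ge> (6 * D * k) * 1"
  proof (rule mult_left_mono)
    show "1 \<le> 2 * (k * D)" using kD assms by linarith
    show "0 \<le> 6 * D * k" using assms by simp
  qed
  then have b: "12 * k^2 * D^2 \<ge> 6 * D * k" by (simp add: power2_eq_square algebra_simps)
  have c: "dm * k \<le> D * k" using assms by (intro mult_right_mono) auto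
  have "(2 * D * k + 1)^2 \<le> 4 * k^2 * D^2 * N^2 - 2 * dm * k + 1"
    using a b c by (simp add: power2_eq_square algebra_simps)
  then have "2 * D * k + 1 \<le> sqrt (4 * k^2 * D^2 * N^2 - 2 * dm * k + 1)" by (rule real_le_rsqrt)
  then show ?thesis using assms by (simp add: pos_le_divide_eq algebra_simps)
qed

lemma num1:
  fixes k :: real
  assumes "k \<ge> 2"
  shows "1 + 1 / k \<le> (2 * 1 * k - 1 + sqrt (4 * k^2 * 1^2 * 1^2 - 2 * 1 * k + 1)) / (2 * k)"
proof -
  have "k * k \<ge> 2 * k" using assms by (intro mult_right_mono) auto
  then have "3^2 \<le> 4 * k^2 * 1^2 * 1^2 - 2 * 1 * k + 1" using assms
    unfolding power2_eq_square by linarith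
  then have "3 \<le> sqrt (4 * k^2 * 1^2 * 1^2 - 2 * 1 * k + 1)" by (rule real_le_rsqrt)
  then show ?thesis using assms by (simp add: pos_le_divide_eq field_simps)
qed

lemma single_edge_eig:
  fixes E :: "('v::finite) set set"
  assumes E: "E = {e}" and U: "UNIV = e" and cm: "card e = m" and m2: "m > 2"
    and ev: "is_eigenvalue (hg_laplacian m E) c"
  shows "c \<le> 1 + 1 / (real m - 1)"
proof (rule ccontr)
  define k where "k = real m - 1"
  have k: "k > 0" using m2 by (simp add: k_def)
  assume "\<not> c \<le> 1 + 1 / (real m - 1)"
  then have cgt: "c - 1 - 1 / k > 0" by (simp add: k_def)
  obtain v where v: "v \<noteq> 0" "hg_laplacian m E *v v = c *\<^sub>R v" using ev unfolding is_eigenvalue_def by blast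
  define s where "s = (\<Sum>j\<in>UNIV. v$j)"
  have L: "hg_laplacian m E $ i $ j = (if i = j then 1 + 1/k else 0) - 1/k" for i j
  proof -
    have "{x \<in> E. i\<in>x \<and> j\<in>x} = E" "{x\<in>E. i\<in>x} = E" using U E by auto
    then have "hg_degree E i = 1" "hg_codegree E i j = 1"
      unfolding hg_degree_def hg_codegree_def using E by auto
    then show ?thesis unfolding hg_laplacian_def using k
      by (cases "i = j") (simp_all add: k_def[symmetric] add_divide_distrib diff_divide_distrib)
  qed
  have row: "c * v$i = (1 + 1/k) * v$i - s / k" for i
  proof -
    have "c * v$i = (\<Sum>j\<in>UNIV. hg_laplacian m E $ i $ j * v$j)"
      using arg_cong[OF v(2), of "\<lambda>x. x$i"] by (simp add: matrix_vector_mult_def)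
    also have "\<dots> = (\<Sum>j\<in>UNIV. (if i = j then (1 + 1/k) * v$j else 0) - v$j / k)"
      by (rule sum.cong) (auto simp: L algebra_simps)
    also have "\<dots> = (1 + 1/k) * v$i - s / k"
      by (simp add: sum_subtractf s_def sum_divide_distrib)
    finally show ?thesis .
  qed
  define t where "t = (- s / k) / (c - 1 - 1/k)"
  have vt: "v$i = t" for i
  proof -
    have "(c - 1 - 1/k) * v$i = - s / k" using row[of i] by (simp add: algebra_simps)
    moreover have "c - 1 - 1/k \<noteq> 0" using cgt by simp
    ultimately show ?thesis unfolding t_def by (metis nonzero_eq_divide_eq mult.commute)
  qed
  have "t \<noteq> 0" using v(1) vt by (auto simp: vec_eq_iff)
  have cardU: "card (UNIV :: 'v set) = m" using U cm by simp
  have "s = real m * t" unfolding s_def using vt cardU by simp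
  then have "(c - 1 - 1/k) * t = (- real m / k) * t" using row[of undefined] vt by (simp add: algebra_simps)
  then have "c - 1 - 1/k = - real m / k" using \<open>t \<noteq> 0\<close> by (metis mult_right_cancel)
  moreover have "real m / k > 0" using k m2 by simp
  ultimately show False using cgt by linarith
qed

theorem corollary6:
  fixes E :: "('v::finite) set set" and m :: nat
  assumes "uniform_hg m E" and "hg_connected E" and "m > 2"
  shows "largest_eigenvalue (hg_laplacian m E) \<le>
    (2 * real (max_degree E) * (real m - 1) - 1
      + sqrt (4 * (real m - 1)^2 * (real (max_degree E))^2 * (real (card E))^2
              - 2 * real (min_degree E) * (real m - 1) + 1))
    / (2 * (real m - 1))"
proof -
  let ?B = "(2 * real (max_degree E) * (real m - 1) - 1
      + sqrt (4 * (real m - 1)^2 * (real (max_degree E))^2 * (real (card E))^2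
              - 2 * real (min_degree E) * (real m - 1) + 1))
    / (2 * (real m - 1))"
  have m2: "m \<ge> 2" using assms(3) by simp
  have k2: "real m - 1 \<ge> 2" using assms(3) by simp
  have fin: "finite {c. is_eigenvalue (hg_laplacian m E) c}"
    by (rule sym_eig_finite) (rule lap_sym)
  have ne: "{c. is_eigenvalue (hg_laplacian m E) c} \<noteq> {}" using zero_eig[OF assms(1) m2] by auto
  have mindeg: "min_degree E \<le> max_degree E"
    unfolding min_degree_def max_degree_def
    using Min_le[of "range (hg_degree E)" "hg_degree E undefined"] Max_ge[of "range (hg_degree E)" "hg_degree E undefined"]
    by auto
  have finE: "finite E" by simp
  have "c \<le> ?B" if ev: "is_eigenvalue (hg_laplacian m E) c" for c
  proof -
    have cD: "c \<le> 2 * real (max_degree E)" by (rule gersh[OF assms(1) m2 ev])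
    consider "card E = 0" | "card E = 1" | "card E \<ge> 2" by linarith
    then show ?thesis
    proof cases
      case 1
      then have "E = {}" using finE by simp
      then have deg0: "hg_degree E i = 0" for i by (simp add: hg_degree_def)
      have "max_degree E = 0" unfolding max_degree_def using deg0 by simp
      moreover have "min_degree E = 0" using mindeg \<open>max_degree E = 0\<close> by simp
      ultimately show ?thesis using cD 1 by simp
    next
      case 2
      then obtain e where E: "E = {e}" using card_1_singletonE by blast
      have ce: "card e = m" using assms(1) E by (simp add: uniform_hg_def)
      have U: "UNIV = e"
      proof -
        have "x \<in> e" for x
        proof -
          have "finite e" by simp
          have "card (e - {x}) \<ge> 1" using ce assms(3) by (cases "x \<in> e") (simp_all add: card_Diff_singleton)
          then obtain y where "y \<in> e" "y \<noteq> x" by (metis card_0_eq finite_Diff all_not_in_conv DiffE insertI1 \<open>finite e\<close> not_one_le_zero)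
          have "(x, y) \<in> (hg_adj E)\<^sup>*" using assms(2) unfolding hg_connected_def by blast
          then show "x \<in> e"
          proof (cases rule: converse_rtranclE)
            case base then show ?thesis using \<open>y \<noteq> x\<close> by simp
          next
            case (step z) then show ?thesis unfolding hg_adj_def E by auto
          qed
        qed
        then show ?thesis by auto
      qed
      have deg1: "hg_degree E i = 1" for i
      proof -
        have "{x\<in>E. i\<in>x} = E" using U E by auto
        then show ?thesis unfolding hg_degree_def using E by simp
      qed
      have "max_degree E = 1" unfolding max_degree_def using deg1 by simp
      moreover have "min_degree E = 1" unfolding min_degree_def using deg1 by simp
      moreover have "c \<le> 1 + 1 / (real m - 1)" by (rule single_edge_eig[OF E U ce assms(3) ev])
      ultimately show ?thesis using num1[OF k2] 2 by simp
    next
      case 3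
      obtain e where "e \<in> E" using 3 by (metis all_not_in_conv card.empty not_numeral_le_zero)
      then have "card e = m" using assms(1) by (simp add: uniform_hg_def)
      then obtain i where "i \<in> e" using assms(3) by (metis all_not_in_conv card.empty not_less_zero)
      have "hg_degree E i \<ge> 1" unfolding hg_degree_def using \<open>e \<in> E\<close> \<open>i \<in> e\<close>
        by (metis (mono_tags, lifting) One_nat_def Suc_leI card_gt_0_iff empty_iff finite_code mem_Collect_eq)
      also have "hg_degree E i \<le> max_degree E" unfolding max_degree_def by (rule Max_ge) auto
      finally have D1: "real (max_degree E) \<ge> 1" by simp
      have "2 * real (max_degree E) \<le> ?B"
        by (rule num2[OF k2 D1]) (use 3 mindeg in auto)
      then show ?thesis using cD by linarith
    qed
  qed
  then show ?thesis unfolding largest_eigenvalue_def using fin ne by (simp add: Max_le_iff)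
qed

end
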